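(* Assume the setting below and that $M_i(1)\ge M_i(0)$ for all $1\le i\le n$. Fix $\boldsymbol\delta\in\mathbb R^n$, $\alpha\in(0,1)$ and $\beta\in(0,\alpha)$. Let $\hat M$ be an integer-valued statistic with $\mathbb P\big(\sum_{i=1}^n M_i(0)\le\hat M\big)\ge1-\beta$. Let $n_{11}=\sum_iZ_iM_i$, $n_{01}=\sum_i(1-Z_i)M_i$ and $\underline m=n_{11}+n_{01}-\hat M$. For each control unit $j$ let $w_j=Y_j$ if $M_j=1$ and $w_j=+\infty$ if $M_j=0$. For each $i$ with $Z_i=M_i=1$ let $A_i=\sum_{j:Z_j=0}\psi_{i,j}(+\infty,w_j)$, $B_i=\sum_{j:Z_j=0}\psi_{i,j}(Y_i-\delta_i,w_j)$ and $D_i=\phi(A_i)-\phi(B_i)$, and order these units as $l_1,\dots,l_{n_{11}}$ so that $D_{l_1}\le\dots\le D_{l_{n_{11}}}$. Let $L^\ast=\{l_1,\dots,l_{m^\ast}\}$ with $m^\ast=\max\{0,\min\{\underline m,n_{11}\}\}$. Define $\tilde{\boldsymbol Y}\in\overline{\mathbb R}^n$ by $\tilde Y_i=+\infty$ if $Z_i=M_i=1$ and $i\in L^\ast$; $\tilde Y_i=Y_i-\delta_i$ if $Z_i=M_i=1$ and $i\notin L^\ast$; $\tilde Y_i=+\infty$ if $Z_i=1,M_i=0$; $\tilde Y_i=Y_i$ if $Z_i=0,M_i=1$; $\tilde Y_i=+\infty$ if $Z_i=0,M_i=0$. Let $$p=G_{\mathrm R,\phi}\big(t_{\mathrm R,\phi}(\boldsymbol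 Z,\tilde{\boldsymbol Y})\big)+\beta,$$ where $t_{\mathrm R,\phi}$ is the Mann–Whitney-type statistic. Then, if $H_{\boldsymbol\delta}:\boldsymbol\tau=\boldsymbol\delta$ holds, $\mathbb P(p\le\alpha)\le\alpha$.
   Context: There are $n$ units. Unit $i$ has fixed potential outcomes $Y_i^\star(0),Y_i^\star(1)\in\mathbb R$ and fixed potential missingness indicators $M_i(0),M_i(1)\in\{0,1\}$; $\tau_i=Y_i^\star(1)-Y_i^\star(0)$, $\boldsymbol\tau=(\tau_1,\dots,\tau_n)^\intercal$. The assignment $\boldsymbol Z\in\{0,1\}^n$ is drawn from a completely randomized experiment (CRE): for fixed positive integers $n_1,n_0$, $n_1+n_0=n$, $\boldsymbol Z$ is uniform over vectors in $\{0,1\}^n$ with exactly $n_1$ ones, independently of all potential outcomes and missingness indicators; probabilities are over $\boldsymbol Z$. Observed missingness $M_i=Z_iM_i(1)+(1-Z_i)M_i(0)$; the realized outcome $Z_iY_i^\star(1)+(1-Z_i)Y_i^\star(0)$ is observed, and denoted $Y_i$, only when $M_i=1$. The statistic $\hat M$ is a function of the observed data. $\overline{\mathbb R}=\mathbb R\cup\{\pm\infty\}$; $\psi_{i,j}(y,y')=\mathbf 1\{y>y'\}+\mathbf 1\{y=y'\}\mathbf 1\{i\ge j\}$ for $y,y'\in\overline{\mathbb R}$. $\phi$ is a fixed nondecreasing real function on the nonnegative integers. The Mann–Whitney-type statistic is $t_{\mathrm R,\phi}(\boldsymbol z,\boldsymbol y)=\sum_{i=1}^n z_i\phi\big(\sum_{j=1}^n(1-z_j)\psi_{i,j}(y_i,y_j)\big)$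 for $\boldsymbol z\in\{0,1\}^n,\boldsymbol y\in\overline{\mathbb R}^n$. $G_{\mathrm R,\phi}(c)=\mathbb P(t_{\mathrm R,\phi}(\boldsymbol A,\boldsymbol y_0)\ge c)$ with $\boldsymbol A$ from the CRE and $\boldsymbol y_0\in\mathbb R^n$ any fixed vector (independent of $\boldsymbol y_0$). Ties among the $D_i$ may be broken arbitrarily. *)

theory Defs
  imports "HOL-Probability.Probability"
begin

text \<open>Units are indexed by 0,...,n-1 (the paper's 1..n shifted by one; order is preserved).
  Assignments are functions nat => bool that are False outside {0..<n}.\<close>

definition cre :: "nat \<Rightarrow> nat \<Rightarrow> (nat \<Rightarrow> bool) set" where
  "cre n n1 = {z. (\<forall>i. n \<le> i \<longrightarrow> \<not> z i) \<and> card {i. i < n \<and> z i} = n1}"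

definition cre_prob :: "nat \<Rightarrow> nat \<Rightarrow> ((nat \<Rightarrow> bool) \<Rightarrow> bool) \<Rightarrow> real" where
  "cre_prob n n1 E = measure_pmf.prob (pmf_of_set (cre n n1)) {z. E z}"

definition psi :: "nat \<Rightarrow> nat \<Rightarrow> ereal \<Rightarrow> ereal \<Rightarrow> nat" where
  "psi i j y y' = of_bool (y > y') + of_bool (y = y') * of_bool (i \<ge> j)"

definition t_R :: "nat \<Rightarrow> (nat \<Rightarrow> real) \<Rightarrow> (nat \<Rightarrow> bool) \<Rightarrow> (nat \<Rightarrow> ereal) \<Rightarrow> real" where
  "t_R n phi z y = (\<Sum>i<n. of_bool (z i) *
      phi (\<Sum>j<n. (1 - of_bool (z j)) * psi i j (y i) (y j)))"

text \<open>G is defined with the fixed reference vector y0 = 0 (the paper notes G does not depend on y0).\<close>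
definition G_R :: "nat \<Rightarrow> nat \<Rightarrow> (nat \<Rightarrow> real) \<Rightarrow> real \<Rightarrow> real" where
  "G_R n n1 phi c = cre_prob n n1 (\<lambda>a. t_R n phi a (\<lambda>_. ereal 0) \<ge> c)"

end

theory Submission imports Defs begin

lemma cre_finite: "finite (cre n n1)"
proof -
  have "cre n n1 \<subseteq> (\<lambda>S i. i \<in> S) ` Pow {..<n}"
  proof
    fix z assume "z \<in> cre n n1"
    then have "z = (\<lambda>i. i \<in> {i. i < n \<and> z i})" unfolding cre_def by (auto intro!: ext) (meson not_le)
    then show "z \<in> (\<lambda>S i. i \<in> S) ` Pow {..<n}" by blast
  qed
  then show ?thesis by (rule finite_subset) auto
qed

lemma cre_ne: "n1 \<le> n \<Longrightarrow> cre n n1 \<noteq> {}"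
proof -
  assume "n1 \<le> n"
  then have "{i. i < n \<and> i < n1} = {..<n1}" by auto
  then have "(\<lambda>i. i < n1) \<in> cre n n1" using \<open>n1 \<le> n\<close> unfolding cre_def by auto
  then show ?thesis by blast
qed

lemma cre_prob_card: "n1 \<le> n \<Longrightarrow> cre_prob n n1 E = card {z \<in> cre n n1. E z} / card (cre n n1)"
  unfolding cre_prob_def
  by (subst measure_pmf_of_set) (auto simp: cre_finite cre_ne Int_def)

lemma valid:
  fixes T :: "'a \<Rightarrow> real" and G :: "real \<Rightarrow> real" and u :: real
  assumes fin: "finite S" and Gdef: "\<And>c. G c = card {z\<in>S. c \<le> T z} / card S"
    and u0: "0 \<le> u"
  shows "real (card {z\<in>S. G (T z) \<le> u}) \<le> u * real (card S)"
proof (cases "{z\<in>S. G (T z) \<le> u} = {}")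
  case True
  then show ?thesis using u0 by (simp del: Collect_empty_eq)
next
  case False
  define Q where "Q = {z\<in>S. G (T z) \<le> u}"
  have fQ: "finite Q" using fin unfolding Q_def by auto
  have "Min (T ` Q) \<in> T ` Q" using False fQ unfolding Q_def by (intro Min_in) auto
  then obtain z0 where z0: "z0 \<in> Q" "T z0 = Min (T ` Q)" by auto
  have "\<forall>z\<in>Q. T z0 \<le> T z" using z0 fQ by auto
  then have sub: "Q \<subseteq> {z\<in>S. T z0 \<le> T z}" unfolding Q_def by auto
  have Sne: "S \<noteq> {}" using z0 unfolding Q_def by auto
  then have cpos: "card S > 0" using fin by (simp add: card_gt_0_iff)
  have "real (card Q) \<le> card {z\<in>S. T z0 \<le> T z}" using sub fin by (intro of_nat_mono card_mono) auto
  also have "\<dots> = G (T z0) * card S" using cpos by (simp add: Gdef)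
  also have "\<dots> \<le> u * card S" using z0 unfolding Q_def by (intro mult_right_mono) auto
  finally show ?thesis unfolding Q_def .
qed

lemma prefix_sum:
  fixes f :: "'a \<Rightarrow> real"
  assumes sorted: "sorted (map f xs)" and K: "K \<subseteq> set xs" "m \<le> card K"
    and nn: "\<And>x. x \<in> set xs \<Longrightarrow> 0 \<le> f x"
  shows "sum f (set (take m xs)) \<le> sum f K"
proof -
  define P where "P = set (take m xs)"
  have fK: "finite K" using K finite_subset by blast
  have fP: "finite P" unfolding P_def by auto
  have Psub: "P \<subseteq> set xs" unfolding P_def by (meson set_take_subset)
  have cP: "card P \<le> m" unfolding P_def by (metis card_length length_take min.bounded_iff)
  have sep: "f a \<le> f b" if "a \<in> P" "b \<in> set xs - P" for a b
  proof -
    have "b \<in> set (drop m xs)" using that unfolding P_def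
      by (metis DiffD1 DiffD2 Un_iff append_take_drop_id set_append)
    moreover have "sorted (map f (take m xs) @ map f (drop m xs))" using sorted
      by (metis append_take_drop_id map_append)
    ultimately show ?thesis using that(1) unfolding P_def sorted_append by auto
  qed
  show ?thesis
  proof (cases "P = {}")
    case True
    then show ?thesis using nn K by (simp add: P_def[symmetric] sum_nonneg subset_iff)
  next
    case False
    define c where "c = Max (f ` P)"
    have cin: "c \<in> f ` P" unfolding c_def using False fP by (intro Max_in) auto
    have c0: "0 \<le> c" using cin nn Psub by auto
    have up: "\<And>a. a \<in> P \<Longrightarrow> f a \<le> c" unfolding c_def using fP by auto
    have low: "\<And>b. b \<in> set xs - P \<Longrightarrow> c \<le> f b" using cin sep by auto
    have s1: "sum f P = sum f (P \<inter> K) + sum f (P - K)"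
      using fP by (rule sum.Int_Diff)
    have s2: "sum f K = sum f (P \<inter> K) + sum f (K - P)"
      using fK sum.Int_Diff[of K f P] by (simp add: Int_commute)
    have a1: "sum f (P - K) \<le> card (P - K) * c"
      using sum_bounded_above[of "P - K" f c] up by auto
    have a2: "card (K - P) * c \<le> sum f (K - P)"
      using sum_bounded_below[of "K - P" c f] low K by auto
    have "card (P - K) \<le> card (K - P)"
    proof -
      have "card (P - K) = card P - card (P \<inter> K)" using fP by (simp add: card_Diff_subset_Int Diff_Int2)
      moreover have "card (K - P) = card K - card (P \<inter> K)" using fK
        by (metis card_Diff_subset_Int Int_commute finite_Int)
      ultimately show ?thesis using cP K by linarith
    qed
    then have "card (P - K) * c \<le> card (K - P) * c" using c0 by (intro mult_right_mono) auto
    then show ?thesis using s1 s2 a1 a2 unfolding P_def by linarith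
  qed
qed

lemma psi_key: "i \<noteq> j \<Longrightarrow> psi i j a b = of_bool (b < a \<or> (b = a \<and> j < i))"
  unfolding psi_def by auto

lemma t_R_zero_inner:
  assumes "z k" "k < n"
  shows "(\<Sum>l<n. (1 - of_bool (z l)) * psi k l (ereal 0) (ereal 0)) = (\<Sum>l<n. (1 - of_bool (z l)) * of_bool (l < k))"
  using assms by (intro sum.cong) (auto simp: psi_def)

lemma t_R_perm:
  fixes y :: "nat \<Rightarrow> ereal" and phi :: "nat \<Rightarrow> real"
  shows "card {z\<in>cre n n1. c \<le> t_R n phi z y} = card {z\<in>cre n n1. c \<le> t_R n phi z (\<lambda>_. ereal 0)}"
proof -
  define kl where "kl j i \<longleftrightarrow> (y j < y i \<or> (y j = y i \<and> j < i))" for j i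
  define r where "r i = card {j. j < n \<and> kl j i}" for i
  have kl_trans: "kl a b \<Longrightarrow> kl b c \<Longrightarrow> kl a c" for a b c unfolding kl_def by auto
  have kl_irr: "\<not> kl a a" for a unfolding kl_def by auto
  have kl_tot: "a \<noteq> b \<Longrightarrow> kl a b \<or> kl b a" for a b unfolding kl_def by auto
  have kl_asym: "kl a b \<Longrightarrow> \<not> kl b a" for a b unfolding kl_def by auto
  have mono: "r j < r i" if "i < n" "j < n" "kl j i" for i j
  proof -
    have "{l. l < n \<and> kl l j} \<subset> {l. l < n \<and> kl l i}"
      using that kl_trans kl_irr by blast
    then show ?thesis unfolding r_def by (intro psubset_card_mono) auto
  qed
  have lt_iff: "r j < r i \<longleftrightarrow> kl j i" if "i < n" "j < n" for i j
    using mono[OF that] mono[OF that(2,1)] kl_tot that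
    by (metis less_irrefl less_not_sym)
  have r_lt: "r i < n" if "i < n" for i
  proof -
    have "{j. j < n \<and> kl j i} \<subseteq> {..<n} - {i}" using kl_irr by auto
    then have "r i \<le> card ({..<n} - {i})" unfolding r_def by (intro card_mono) auto
    then show ?thesis using that by auto
  qed
  have inj: "inj_on r {..<n}"
  proof (rule inj_onI)
    fix a b assume "a \<in> {..<n}" "b \<in> {..<n}" "r a = r b"
    then show "a = b" using lt_iff kl_tot by (metis lessThan_iff less_irrefl)
  qed
  have rimg: "r ` {..<n} = {..<n}"
    using inj r_lt by (intro endo_inj_surj) auto
  define Psi where "Psi z' = (\<lambda>i. i < n \<and> z' (r i))" for z' :: "nat \<Rightarrow> bool"
  have teq: "t_R n phi (Psi z') y = t_R n phi z' (\<lambda>_. ereal 0)" for z'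
  proof -
    define g where "g k = of_bool (z' k) * phi (\<Sum>l<n. (1 - of_bool (z' l)) * of_bool (l < k))" for k
    have "t_R n phi (Psi z') y = (\<Sum>i<n. g (r i))"
      unfolding t_R_def
    proof (intro sum.cong refl)
      fix i assume i: "i \<in> {..<n}"
      show "of_bool (Psi z' i) * phi (\<Sum>j<n. (1 - of_bool (Psi z' j)) * psi i j (y i) (y j)) = g (r i)"
      proof (cases "z' (r i)")
        case True
        have "(\<Sum>j<n. (1 - of_bool (Psi z' j)) * psi i j (y i) (y j))
            = (\<Sum>j<n. (1 - of_bool (z' (r j))) * of_bool (r j < r i))"
        proof (intro sum.cong refl)
          fix j assume j: "j \<in> {..<n}"
          show "(1 - of_bool (Psi z' j)) * psi i j (y i) (y j) = (1 - of_bool (z' (r j))) * of_bool (r j < r i)"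
          proof (cases "j = i")
            case True then show ?thesis using \<open>z' (r i)\<close> i by (simp add: Psi_def)
          next
            case False then show ?thesis using i j lt_iff[of i j] by (simp add: Psi_def psi_key kl_def)
          qed
        qed
        also have "\<dots> = (\<Sum>l\<in>r ` {..<n}. (1 - of_bool (z' l)) * of_bool (l < r i))"
          by (simp only: sum.reindex[OF inj] o_def)
        finally show ?thesis using True i by (simp add: Psi_def g_def rimg)
      next
        case False then show ?thesis using i by (simp add: Psi_def g_def)
      qed
    qed
    also have "\<dots> = (\<Sum>k\<in>r ` {..<n}. g k)" using inj by (simp add: sum.reindex)
    also have "\<dots> = t_R n phi z' (\<lambda>_. ereal 0)" unfolding rimg t_R_def g_def
    proof (intro sum.cong refl)
      fix k assume k: "k \<in> {..<n}"
      show "of_bool (z' k) * phi (\<Sum>l<n. (1 - of_bool (z' l)) * of_bool (l < k)) =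
        of_bool (z' k) * phi (\<Sum>l<n. (1 - of_bool (z' l)) * psi k l (ereal 0) (ereal 0))"
        using t_R_zero_inner[of z' k n] k by (cases "z' k") auto
    qed
    finally show ?thesis .
  qed
  have Psi_cre: "Psi z' \<in> cre n n1" if "z' \<in> cre n n1" for z'
  proof -
    have "r ` {i. i < n \<and> z' (r i)} = {k. k < n \<and> z' k}" using rimg by auto
    moreover have "inj_on r {i. i < n \<and> z' (r i)}" using inj by (rule inj_on_subset) auto
    ultimately have "card {i. i < n \<and> z' (r i)} = card {k. k < n \<and> z' k}" by (metis card_image)
    then show ?thesis using that unfolding cre_def Psi_def by auto
  qed
  have Psi_inj: "inj_on Psi (cre n n1)"
  proof (rule inj_onI)
    fix z1 z2 assume z: "z1 \<in> cre n n1" "z2 \<in> cre n n1" "Psi z1 = Psi z2"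
    show "z1 = z2"
    proof
      fix k show "z1 k = z2 k"
      proof (cases "k < n")
        case True
        then obtain i where "i < n" "k = r i" using rimg by (metis imageE lessThan_iff)
        then show ?thesis using fun_cong[OF z(3), of i] by (simp add: Psi_def)
      next
        case False then show ?thesis using z(1,2) unfolding cre_def by auto
      qed
    qed
  qed
  have Psi_img: "Psi ` cre n n1 = cre n n1"
    using cre_finite Psi_cre Psi_inj by (intro endo_inj_surj) auto
  have "{z\<in>cre n n1. c \<le> t_R n phi z y} = Psi ` {z\<in>cre n n1. c \<le> t_R n phi z (\<lambda>_. ereal 0)}"
  proof
    show "Psi ` {z\<in>cre n n1. c \<le> t_R n phi z (\<lambda>_. ereal 0)} \<subseteq> {z\<in>cre n n1. c \<le> t_R n phi z y}"
      using Psi_cre teq by auto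
    show "{z\<in>cre n n1. c \<le> t_R n phi z y} \<subseteq> Psi ` {z\<in>cre n n1. c \<le> t_R n phi z (\<lambda>_. ereal 0)}"
    proof
      fix z assume z: "z \<in> {z\<in>cre n n1. c \<le> t_R n phi z y}"
      then obtain z' where "z' \<in> cre n n1" "z = Psi z'" using Psi_img by blast
      then show "z \<in> Psi ` {z\<in>cre n n1. c \<le> t_R n phi z (\<lambda>_. ereal 0)}" using z teq by auto
    qed
  qed
  moreover have "inj_on Psi {z\<in>cre n n1. c \<le> t_R n phi z (\<lambda>_. ereal 0)}"
    using Psi_inj by (rule inj_on_subset) auto
  ultimately show ?thesis by (simp add: card_image)
qed

theorem theorem4:
  fixes n n1 n0 :: nat
    and Y1 Y0 :: "nat \<Rightarrow> real"
    and M1 M0 :: "nat \<Rightarrow> bool"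
    and phi :: "nat \<Rightarrow> real"
    and delta :: "nat \<Rightarrow> real"
    and alpha beta :: real
    and Mhat :: "(nat \<Rightarrow> bool) \<Rightarrow> (nat \<Rightarrow> real option) \<Rightarrow> int"
    and ordl :: "(nat \<Rightarrow> bool) \<Rightarrow> nat list"
    and Mo :: "(nat \<Rightarrow> bool) \<Rightarrow> nat \<Rightarrow> bool"
    and Yo :: "(nat \<Rightarrow> bool) \<Rightarrow> nat \<Rightarrow> real"
    and obs :: "(nat \<Rightarrow> bool) \<Rightarrow> nat \<Rightarrow> real option"
    and n11 n01 :: "(nat \<Rightarrow> bool) \<Rightarrow> nat"
    and w :: "(nat \<Rightarrow> bool) \<Rightarrow> nat \<Rightarrow> ereal"
    and A B :: "(nat \<Rightarrow> bool) \<Rightarrow> nat \<Rightarrow> nat"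
    and D :: "(nat \<Rightarrow> bool) \<Rightarrow> nat \<Rightarrow> real"
    and mstar :: "(nat \<Rightarrow> bool) \<Rightarrow> nat"
    and Lstar :: "(nat \<Rightarrow> bool) \<Rightarrow> nat set"
    and Ytil :: "(nat \<Rightarrow> bool) \<Rightarrow> nat \<Rightarrow> ereal"
    and p :: "(nat \<Rightarrow> bool) \<Rightarrow> real"
  assumes n1_pos: "0 < n1" and n0_pos: "0 < n0" and n_eq: "n = n1 + n0"
    and mono_M: "\<And>i. i < n \<Longrightarrow> M0 i \<longrightarrow> M1 i"
    and phi_mono: "mono phi"
    and alpha: "0 < alpha" "alpha < 1"
    and beta: "0 < beta" "beta < alpha"
    and Mo_def: "Mo \<equiv> (\<lambda>z i. if z i then M1 i else M0 i)"
    and Yo_def: "Yo \<equiv> (\<lambda>z i. if z i then Y1 i else Y0 i)"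
    and obs_def: "obs \<equiv> (\<lambda>z i. if i < n \<and> Mo z i then Some (Yo z i) else None)"
    and Mhat_cov: "cre_prob n n1 (\<lambda>z. int (card {i. i < n \<and> M0 i}) \<le> Mhat z (obs z)) \<ge> 1 - beta"
    and n11_def: "n11 \<equiv> (\<lambda>z. card {i. i < n \<and> z i \<and> Mo z i})"
    and n01_def: "n01 \<equiv> (\<lambda>z. card {i. i < n \<and> \<not> z i \<and> Mo z i})"
    and w_def: "w \<equiv> (\<lambda>z j. if Mo z j then ereal (Yo z j) else \<infinity>)"
    and A_def: "A \<equiv> (\<lambda>z i. \<Sum>j\<in>{j. j < n \<and> \<not> z j}. psi i j \<infinity> (w z j))"
    and B_def: "B \<equiv> (\<lambda>z i. \<Sum>j\<in>{j. j < n \<and> \<not> z j}. psi i j (ereal (Yo z i - delta i)) (w z j))"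
    and D_def: "D \<equiv> (\<lambda>z i. phi (A z i) - phi (B z i))"
    and ordl: "\<And>z. z \<in> cre n n1 \<Longrightarrow> distinct (ordl z) \<and>
                 set (ordl z) = {i. i < n \<and> z i \<and> Mo z i} \<and> sorted (map (D z) (ordl z))"
    and mstar_def: "mstar \<equiv> (\<lambda>z. nat (max 0 (min (int (n11 z) + int (n01 z) - Mhat z (obs z)) (int (n11 z)))))"
    and Lstar_def: "Lstar \<equiv> (\<lambda>z. set (take (mstar z) (ordl z)))"
    and Ytil_def: "Ytil \<equiv> (\<lambda>z i.
           if z i \<and> Mo z i then (if i \<in> Lstar z then \<infinity> else ereal (Yo z i - delta i))
           else if z i \<and> \<not> Mo z i then \<infinity>
           else if \<not> z i \<and> Mo z i then ereal (Yo z i)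
           else \<infinity>)"
    and p_def: "p \<equiv> (\<lambda>z. G_R n n1 phi (t_R n phi z (Ytil z)) + beta)"
    and H_delta: "\<And>i. i < n \<Longrightarrow> Y1 i - Y0 i = delta i"
  shows "cre_prob n n1 (\<lambda>z. p z \<le> alpha) \<le> alpha"
proof -
  have n1n: "n1 \<le> n" using n_eq by simp
  define S where "S = cre n n1"
  define N where "N = card S"
  have finS: "finite S" unfolding S_def by (rule cre_finite)
  have Sne: "S \<noteq> {}" unfolding S_def using n1n by (rule cre_ne)
  have Npos: "0 < N" unfolding N_def using finS Sne by (simp add: card_gt_0_iff)
  have cp: "cre_prob n n1 E = card {z\<in>S. E z} / N" for E
    unfolding S_def N_def using n1n by (rule cre_prob_card)
  define Ys where "Ys i = (if M0 i then ereal (Y0 i) else \<infinity>)" for i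
  define T where "T z = t_R n phi z Ys" for z
  have Gc: "G_R n n1 phi c = card {z\<in>S. c \<le> T z} / N" for c
    unfolding G_R_def cp T_def S_def using t_R_perm[of n n1 c phi Ys] by simp
  have Gmono: "G_R n n1 phi c' \<le> G_R n n1 phi c" if "c \<le> c'" for c c'
  proof -
    have "card {z\<in>S. c' \<le> T z} \<le> card {z\<in>S. c \<le> T z}"
      using finS that by (intro card_mono) auto
    then show ?thesis unfolding Gc using Npos by (simp add: divide_right_mono)
  qed
  have val: "real (card {z\<in>S. G_R n n1 phi (T z) \<le> alpha - beta}) \<le> (alpha - beta) * real N"
    unfolding N_def using finS beta by (intro valid) (auto simp: Gc N_def)
  define E where "E z \<longleftrightarrow> int (card {i. i < n \<and> M0 i}) \<le> Mhat z (obs z)" for z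
  have key: "t_R n phi z (Ytil z) \<le> T z" if zS: "z \<in> S" and Ez: "E z" for z
  proof -
    have zc: "z \<in> cre n n1" using zS unfolding S_def .
    define Ctrl where "Ctrl = {j. j < n \<and> \<not> z j}"
    define Obs where "Obs = {i. i < n \<and> z i \<and> Mo z i}"
    define K where "K = {i. i < n \<and> z i \<and> Mo z i \<and> \<not> M0 i}"
    define L where "L = Lstar z"
    have od: "distinct (ordl z)" "set (ordl z) = Obs" "sorted (map (D z) (ordl z))"
      using ordl[OF zc] unfolding Obs_def by auto
    have Lsub: "L \<subseteq> Obs" unfolding L_def Lstar_def using od(2) by (metis set_take_subset)
    have Ksub: "K \<subseteq> Obs" unfolding K_def Obs_def by auto
    have finO: "finite Obs" unfolding Obs_def by auto
    have cnt: "(\<Sum>j<n. (1 - of_bool (z j)) * psi i j (yy i) (yy j)) = (\<Sum>j\<in>Ctrl. psi i j (yy i) (w z j))"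
      if yy: "\<And>j. j < n \<Longrightarrow> \<not> z j \<Longrightarrow> yy j = w z j" for yy i
      by (rule sum.mono_neutral_cong_right) (auto simp: Ctrl_def yy)
    have Ytil_c: "Ytil z j = w z j" if "j < n" "\<not> z j" for j
      using that unfolding Ytil_def w_def by auto
    have Ys_c: "Ys j = w z j" if "j < n" "\<not> z j" for j
      using that unfolding Ys_def w_def Mo_def Yo_def by auto
    have Ai: "A z i = (\<Sum>j\<in>Ctrl. psi i j \<infinity> (w z j))" for i unfolding A_def Ctrl_def by simp
    have Bi: "B z i = (\<Sum>j\<in>Ctrl. psi i j (ereal (Yo z i - delta i)) (w z j))" for i
      unfolding B_def Ctrl_def by simp
    have psi_le: "psi i j (ereal a) v \<le> psi i j \<infinity> v" for i j a v
      by (cases v) (auto simp: psi_def)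
    have Dnn: "0 \<le> D z i" for i
    proof -
      have "B z i \<le> A z i" unfolding Ai Bi by (intro sum_mono psi_le)
      then show ?thesis unfolding D_def using phi_mono by (simp add: monoD)
    qed
    have til_i: "phi (\<Sum>j<n. (1 - of_bool (z j)) * psi i j (Ytil z i) (Ytil z j))
        = phi (A z i) - of_bool (i \<in> Obs - L) * D z i" if "i < n" "z i" for i
    proof (cases "i \<in> Obs - L")
      case True
      then have "Ytil z i = ereal (Yo z i - delta i)" using that unfolding Ytil_def Obs_def L_def by auto
      then have "(\<Sum>j<n. (1 - of_bool (z j)) * psi i j (Ytil z i) (Ytil z j)) = B z i"
        using cnt[of "Ytil z" i, OF Ytil_c] Bi[of i] by simp
      then show ?thesis using True unfolding D_def by simp
    next
      case False
      then have "Ytil z i = \<infinity>" using that unfolding Ytil_def Obs_def L_def by auto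
      then have "(\<Sum>j<n. (1 - of_bool (z j)) * psi i j (Ytil z i) (Ytil z j)) = A z i"
        using cnt[of "Ytil z" i, OF Ytil_c] Ai[of i] by simp
      then show ?thesis using False by simp
    qed
    have star_i: "phi (\<Sum>j<n. (1 - of_bool (z j)) * psi i j (Ys i) (Ys j))
        = phi (A z i) - of_bool (i \<in> Obs - K) * D z i" if "i < n" "z i" for i
    proof (cases "M0 i")
      case True
      then have io: "i \<in> Obs - K" using that mono_M unfolding Obs_def K_def Mo_def by auto
      have "Ys i = ereal (Yo z i - delta i)" using True that H_delta[of i] unfolding Ys_def Yo_def
        by (auto simp: algebra_simps)
      then have "(\<Sum>j<n. (1 - of_bool (z j)) * psi i j (Ys i) (Ys j)) = B z i"
        using cnt[of Ys i, OF Ys_c] Bi[of i] by simp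
      then show ?thesis using io unfolding D_def by simp
    next
      case False
      then have "i \<notin> Obs - K" unfolding K_def Obs_def by auto
      moreover have "Ys i = \<infinity>" using False unfolding Ys_def by auto
      moreover have "(\<Sum>j<n. (1 - of_bool (z j)) * psi i j (Ys i) (Ys j)) = A z i"
        using cnt[of Ys i, OF Ys_c] Ai[of i] \<open>Ys i = \<infinity>\<close> by simp
      ultimately show ?thesis by simp
    qed
    have ind: "(\<Sum>i<n. of_bool (i \<in> X) * f i) = sum f X" if "X \<subseteq> {..<n}" for X and f :: "nat \<Rightarrow> real"
      by (rule sum.mono_neutral_cong_right) (use that in auto)
    have OLn: "Obs - L \<subseteq> {..<n}" "Obs - K \<subseteq> {..<n}" unfolding Obs_def by auto
    have t1: "t_R n phi z (Ytil z) = (\<Sum>i<n. of_bool (z i) * phi (A z i)) - sum (D z) (Obs - L)"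
    proof -
      have "t_R n phi z (Ytil z) = (\<Sum>i<n. of_bool (z i) * phi (A z i) - of_bool (i \<in> Obs - L) * D z i)"
        unfolding t_R_def
      proof (intro sum.cong refl)
        fix i assume "i \<in> {..<n}"
        then show "of_bool (z i) * phi (\<Sum>j<n. (1 - of_bool (z j)) * psi i j (Ytil z i) (Ytil z j)) =
          of_bool (z i) * phi (A z i) - of_bool (i \<in> Obs - L) * D z i"
          using til_i[of i] by (cases "z i") (auto simp: Obs_def)
      qed
      then show ?thesis by (simp only: sum_subtractf ind[OF OLn(1)])
    qed
    have t2: "T z = (\<Sum>i<n. of_bool (z i) * phi (A z i)) - sum (D z) (Obs - K)"
    proof -
      have "T z = (\<Sum>i<n. of_bool (z i) * phi (A z i) - of_bool (i \<in> Obs - K) * D z i)"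
        unfolding t_R_def T_def
      proof (intro sum.cong refl)
        fix i assume "i \<in> {..<n}"
        then show "of_bool (z i) * phi (\<Sum>j<n. (1 - of_bool (z j)) * psi i j (Ys i) (Ys j)) =
          of_bool (z i) * phi (A z i) - of_bool (i \<in> Obs - K) * D z i"
          using star_i[of i] by (cases "z i") (auto simp: Obs_def)
      qed
      then show ?thesis by (simp only: sum_subtractf ind[OF OLn(2)])
    qed
    have mK: "mstar z \<le> card K"
    proof -
      define T0 where "T0 = {i. i < n \<and> z i \<and> M0 i}"
      define C0 where "C0 = {i. i < n \<and> \<not> z i \<and> M0 i}"
      have "{i. i < n \<and> M0 i} = T0 \<union> C0" unfolding T0_def C0_def by auto
      then have c1: "card {i. i < n \<and> M0 i} = card T0 + card C0"
        by (simp add: card_Un_disjoint T0_def C0_def disjoint_iff)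
      have c2: "n01 z = card C0" unfolding n01_def C0_def Mo_def
        by (intro arg_cong[where f=card]) auto
      have c3: "n11 z = card Obs" unfolding n11_def Obs_def ..
      have "K = Obs - T0" unfolding K_def Obs_def T0_def using mono_M unfolding Mo_def by auto
      moreover have "T0 \<subseteq> Obs" unfolding T0_def Obs_def using mono_M unfolding Mo_def by auto
      ultimately have c4: "card K = card Obs - card T0" "card T0 \<le> card Obs"
        using finO by (auto simp: card_Diff_subset finite_subset card_mono)
      have "int (mstar z) \<le> int (card K)"
        using Ez c1 c2 c3 c4 unfolding mstar_def E_def by simp
      then show ?thesis by simp
    qed
    have "sum (D z) L \<le> sum (D z) K"
      unfolding L_def Lstar_def
      by (rule prefix_sum[OF od(3)]) (use Ksub od mK Dnn in auto)
    then have "sum (D z) (Obs - K) \<le> sum (D z) (Obs - L)"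
      using finO Lsub Ksub by (simp add: sum_diff)
    then show ?thesis using t1 t2 by simp
  qed
  have incl: "{z\<in>S. p z \<le> alpha} \<subseteq> {z\<in>S. G_R n n1 phi (T z) \<le> alpha - beta} \<union> {z\<in>S. \<not> E z}"
  proof
    fix z assume z: "z \<in> {z\<in>S. p z \<le> alpha}"
    show "z \<in> {z\<in>S. G_R n n1 phi (T z) \<le> alpha - beta} \<union> {z\<in>S. \<not> E z}"
    proof (cases "E z")
      case True
      then have "G_R n n1 phi (T z) \<le> G_R n n1 phi (t_R n phi z (Ytil z))"
        using key z by (intro Gmono) auto
      then show ?thesis using z unfolding p_def by auto
    qed (use z in auto)
  qed
  have cE: "real (card {z\<in>S. \<not> E z}) \<le> beta * real N"
  proof -
    have "card {z\<in>S. E z} / N \<ge> 1 - beta" using Mhat_cov unfolding cp E_def by simp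
    then have "real (card {z\<in>S. E z}) \<ge> (1 - beta) * N" using Npos by (simp add: field_simps)
    moreover have "card {z\<in>S. \<not> E z} + card {z\<in>S. E z} = N"
      unfolding N_def using finS by (subst card_Un_disjoint[symmetric]) (auto intro: arg_cong[where f=card])
    then have "real (card {z\<in>S. \<not> E z}) + real (card {z\<in>S. E z}) = real N"
      by (metis of_nat_add)
    ultimately show ?thesis by (simp add: algebra_simps)
  qed
  have "real (card {z\<in>S. p z \<le> alpha}) \<le> real (card ({z\<in>S. G_R n n1 phi (T z) \<le> alpha - beta} \<union> {z\<in>S. \<not> E z}))"
    using incl finS by (intro of_nat_mono card_mono) auto
  also have "\<dots> \<le> real (card {z\<in>S. G_R n n1 phi (T z) \<le> alpha - beta}) + real (card {z\<in>S. \<not> E z})"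
    unfolding of_nat_add[symmetric] of_nat_le_iff by (rule card_Un_le)
  also have "\<dots> \<le> alpha * N" using val cE by (simp add: algebra_simps)
  finally show ?thesis unfolding cp using Npos by (simp add: field_simps)
qed

end
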